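(* Let $N\ge 2$ be an integer and let $f_1,f_2$ be non-negative integers such that the map $f:\{0,1,\ldots,N-1\}\to\{0,1,\ldots,N-1\}$, $f(x)=(f_1x+f_2x^2) \bmod N$, is a permutation of $\{0,1,\ldots,N-1\}$. Then the interleaver $f$ is maximum contention-free.
   Context: An interleaver of length $N$ is a permutation $f$ of $\{0,1,\ldots,N-1\}$; let $g=f^{-1}$ denote its inverse (the deinterleaver). For a positive integer $W$ dividing $N$, put $M=N/W$. The interleaver $f$ is called contention-free for window size $W$ if for both $\pi=f$ and $\pi=g$ we have $\lfloor \pi(j+tW)/W\rfloor \neq \lfloor \pi(j+vW)/W\rfloor$ for all integers $j,t,v$ with $0\le j<W$ and $0\le t<v<M$. The interleaver is called maximum contention-free if it is contention-free for every window size $W$ that is a positive divisor of $N$. Here $a \bmod N$ denotes the representative of $a$ modulo $N$ in $\{0,\ldots,N-1\}$. *)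

theory Defs
  imports Main
begin

definition is_interleaver :: "nat \<Rightarrow> (nat \<Rightarrow> nat) \<Rightarrow> bool" where
  "is_interleaver N f \<longleftrightarrow> bij_betw f {0..<N} {0..<N}"

definition deinterleaver :: "nat \<Rightarrow> (nat \<Rightarrow> nat) \<Rightarrow> (nat \<Rightarrow> nat)" where
  "deinterleaver N f = inv_into {0..<N} f"

definition window_cf :: "nat \<Rightarrow> nat \<Rightarrow> (nat \<Rightarrow> nat) \<Rightarrow> bool" where
  "window_cf N W pi \<longleftrightarrow>
     (\<forall>j t v. j < W \<longrightarrow> t < v \<longrightarrow> v < N div W \<longrightarrow>
        pi (j + t * W) div W \<noteq> pi (j + v * W) div W)"

definition contention_free :: "nat \<Rightarrow> (nat \<Rightarrow> nat) \<Rightarrow> nat \<Rightarrow> bool" where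
  "contention_free N f W \<longleftrightarrow>
     window_cf N W f \<and> window_cf N W (deinterleaver N f)"

definition maximum_contention_free :: "nat \<Rightarrow> (nat \<Rightarrow> nat) \<Rightarrow> bool" where
  "maximum_contention_free N f \<longleftrightarrow>
     (\<forall>W. 0 < W \<longrightarrow> W dvd N \<longrightarrow> contention_free N f W)"

end

theory Submission
  imports Defs
begin

lemma hmod: "((f1::nat) * x + f2 * x^2) mod W = (f1 * (x mod W) + f2 * (x mod W)^2) mod W"
  by (metis mod_add_cong mod_mult_right_eq power_mod)

lemma eq_by_divmod: "(a::nat) div W = b div W \<Longrightarrow> a mod W = b mod W \<Longrightarrow> a = b"
  by (metis div_mult_mod_eq)

lemma bound: "(j::nat) < W \<Longrightarrow> v < N div W \<Longrightarrow> W dvd N \<Longrightarrow> j + v * W < N"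
proof -
  assume a: "j < W" "v < N div W" "W dvd N"
  have "Suc v * W \<le> N div W * W" using a(2) by (intro mult_le_mono1) simp
  also have "\<dots> = N" using a(3) by simp
  finally show ?thesis using a(1) by simp
qed

theorem theorem1:
  fixes N f1 f2 :: nat
  assumes "N \<ge> 2"
    and "is_interleaver N (\<lambda>x. (f1 * x + f2 * x^2) mod N)"
  shows "maximum_contention_free N (\<lambda>x. (f1 * x + f2 * x^2) mod N)"
  unfolding maximum_contention_free_def
proof (intro allI impI)
  fix W :: nat
  assume W0: "0 < W" and Wd: "W dvd N"
  define f where "f = (\<lambda>x. (f1 * x + f2 * x^2) mod N)"
  define h where "h = (\<lambda>x. (f1 * x + f2 * x^2) mod W)"
  have bij: "bij_betw f {0..<N} {0..<N}" using assms(2) unfolding is_interleaver_def f_def .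
  have fh: "f x mod W = h x" for x unfolding f_def h_def using Wd by (simp add: mod_mod_cancel)
  have hm: "h x = h (x mod W)" for x unfolding h_def by (rule hmod)
  have surj: "{0..<W} \<subseteq> h ` {0..<W}"
  proof
    fix y assume y: "y \<in> {0..<W}"
    have "W \<le> N" using Wd assms(1) by (simp add: dvd_imp_le)
    then have "y \<in> {0..<N}" using y by auto
    then obtain a where "a \<in> {0..<N}" "f a = y" using bij by (metis bij_betw_imp_surj_on imageE)
    then have "h (a mod W) = y" using fh hm y by (metis atLeastLessThan_iff mod_less)
    moreover have "a mod W \<in> {0..<W}" using W0 by simp
    ultimately show "y \<in> h ` {0..<W}" by blast
  qed
  have injh: "inj_on h {0..<W}" using finite_surj_inj[OF _ surj] by simp
  have hinj: "h a = h b \<Longrightarrow> a mod W = b mod W" for a b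
    using inj_onD[OF injh, of "a mod W" "b mod W"] hm[of a] hm[of b] W0 by simp
  have injf: "inj_on f {0..<N}" using bij bij_betw_def by blast
  show "contention_free N (\<lambda>x. (f1 * x + f2 * x^2) mod N) W"
    unfolding contention_free_def f_def[symmetric]
  proof
    show "window_cf N W f" unfolding window_cf_def
    proof (intro allI impI notI)
      fix j t v assume j: "j < W" and tv: "t < v" and v: "v < N div W"
        and eq: "f (j + t * W) div W = f (j + v * W) div W"
      have bv: "j + v * W < N" using bound j v Wd by blast
      have bt: "j + t * W < N" proof -
        have "t * W \<le> v * W" using tv by (intro mult_le_mono1) simp
        then show ?thesis using bv by linarith
      qed
      have "h (j + t * W) = h (j + v * W)" using hm[of "j + t * W"] hm[of "j + v * W"] by simp
      then have "f (j + t * W) mod W = f (j + v * W) mod W" using fh[of "j + t * W"] fh[of "j + v * W"] by simp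
      then have "f (j + t * W) = f (j + v * W)" using eq eq_by_divmod by blast
      then show False using inj_onD[OF injf, of "j + t * W" "j + v * W"] bv bt tv W0 by simp
    qed
  next
    show "window_cf N W (deinterleaver N f)" unfolding window_cf_def deinterleaver_def
    proof (intro allI impI notI)
      fix j t v assume j: "j < W" and tv: "t < v" and v: "v < N div W"
        and eq: "inv_into {0..<N} f (j + t * W) div W = inv_into {0..<N} f (j + v * W) div W"
      have bv: "j + v * W < N" using bound j v Wd by blast
      have bt: "j + t * W < N" proof -
        have "t * W \<le> v * W" using tv by (intro mult_le_mono1) simp
        then show ?thesis using bv by linarith
      qed
      define a where "a = inv_into {0..<N} f (j + t * W)"
      define b where "b = inv_into {0..<N} f (j + v * W)"
      have fa: "f a = j + t * W" unfolding a_def using bij bt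
        by (simp add: bij_betw_inv_into_right)
      have fb: "f b = j + v * W" unfolding b_def using bij bv
        by (simp add: bij_betw_inv_into_right)
      have "h a = h b" using fa fb fh[of a] fh[of b] by simp
      then have "a mod W = b mod W" by (rule hinj)
      then have "a = b" using eq unfolding a_def[symmetric] b_def[symmetric] using eq_by_divmod by blast
      then have "j + t * W = j + v * W" using fa fb by metis
      then show False using tv W0 by simp
    qed
  qed
qed

end
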